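(* Let $G=(V,E)$ be a directed graph, $s\neq t$ vertices and $k$ an integer with $1\le k\le 4$. Then the edge set of the upper-bound graph $SPG^u_k(s,t)$ equals the edge set of $SPG_k(s,t)$.
   Context: A path from $x$ to $y$ in $G$ is a vertex sequence $x=v_0,\dots,v_m=y$ with $(v_{i-1},v_i)\in E$; its length is $m$ and $V(p)$, $E(p)$ are its vertex and edge sets. A simple path has no repeated vertex. $SPG_k(s,t)$ is the subgraph of $G$ formed by the union of vertex sets and edge sets of all simple paths from $s$ to $t$ of length at most $k$. For a vertex $u$ and integer $l\ge 0$, $EV^*_l(s,u)$ exists iff there is at least one simple path from $s$ to $u$ of length at most $l$ not containing $t$, and then $EV^*_l(s,u)$ is the intersection of $V(p)$ over all such paths. Symmetrically, $EV^*_l(v,t)$ exists iff there is at least one simple path from $v$ to $t$ of length at most $l$ not containing $s$, and then it is the intersection of $V(p)$ over all such paths. The upper-bound graph $SPG^u_k(s,t)$ is the subgraph of $G$ whose edges are exactly those $e(u,v)\in E$ for which there exist integers $k_f,k_b\ge 0$ such that $EV^*_{k_f}(s,u)$ and $EV^*_{k_b}(v,t)$ exist, $k_f+1+k_b\le k$, and $EV^*_{k_f}(s,u)\cap EV^*_{k_b}(v,t)=\emptyset$. *)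

theory Defs
  imports Main
begin

definition is_path :: "'a set \<Rightarrow> ('a \<times> 'a) set \<Rightarrow> 'a list \<Rightarrow> 'a \<Rightarrow> 'a \<Rightarrow> bool" where
  "is_path V E p x y \<longleftrightarrow> p \<noteq> [] \<and> hd p = x \<and> last p = y \<and> set p \<subseteq> V \<and>
     (\<forall>i. i + 1 < length p \<longrightarrow> (p ! i, p ! (i + 1)) \<in> E)"

definition path_len :: "'a list \<Rightarrow> nat" where
  "path_len p = length p - 1"

definition path_edges :: "'a list \<Rightarrow> ('a \<times> 'a) set" where
  "path_edges p = set (zip p (tl p))"

definition spg_edges :: "'a set \<Rightarrow> ('a \<times> 'a) set \<Rightarrow> 'a \<Rightarrow> 'a \<Rightarrow> nat \<Rightarrow> ('a \<times> 'a) set" where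
  "spg_edges V E s t k =
     (\<Union>{path_edges p | p. is_path V E p s t \<and> distinct p \<and> path_len p \<le> k})"

definition fwd_paths :: "'a set \<Rightarrow> ('a \<times> 'a) set \<Rightarrow> 'a \<Rightarrow> 'a \<Rightarrow> nat \<Rightarrow> 'a \<Rightarrow> 'a list set" where
  "fwd_paths V E s t l u = {p. is_path V E p s u \<and> distinct p \<and> path_len p \<le> l \<and> t \<notin> set p}"

definition bwd_paths :: "'a set \<Rightarrow> ('a \<times> 'a) set \<Rightarrow> 'a \<Rightarrow> 'a \<Rightarrow> nat \<Rightarrow> 'a \<Rightarrow> 'a list set" where
  "bwd_paths V E s t l v = {p. is_path V E p v t \<and> distinct p \<and> path_len p \<le> l \<and> s \<notin> set p}"

text \<open>EV*_l(s,u) (meaningful when fwd_paths is nonempty) and EV*_l(v,t).\<close>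
definition EV_fwd :: "'a set \<Rightarrow> ('a \<times> 'a) set \<Rightarrow> 'a \<Rightarrow> 'a \<Rightarrow> nat \<Rightarrow> 'a \<Rightarrow> 'a set" where
  "EV_fwd V E s t l u = (\<Inter>p \<in> fwd_paths V E s t l u. set p)"

definition EV_bwd :: "'a set \<Rightarrow> ('a \<times> 'a) set \<Rightarrow> 'a \<Rightarrow> 'a \<Rightarrow> nat \<Rightarrow> 'a \<Rightarrow> 'a set" where
  "EV_bwd V E s t l v = (\<Inter>p \<in> bwd_paths V E s t l v. set p)"

definition spg_upper_edges :: "'a set \<Rightarrow> ('a \<times> 'a) set \<Rightarrow> 'a \<Rightarrow> 'a \<Rightarrow> nat \<Rightarrow> ('a \<times> 'a) set" where
  "spg_upper_edges V E s t k =
     {(u, v) \<in> E. \<exists>kf kb. fwd_paths V E s t kf u \<noteq> {} \<and> bwd_paths V E s t kb v \<noteq> {} \<and>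
        kf + 1 + kb \<le> k \<and> EV_fwd V E s t kf u \<inter> EV_bwd V E s t kb v = {}}"

end

theory Submission
  imports Defs
begin

lemma edges_iff: "(\<forall>i. i + 1 < length p \<longrightarrow> (p ! i, p ! (i + 1)) \<in> E) \<longleftrightarrow> set (zip p (tl p)) \<subseteq> E"
proof
  assume "\<forall>i. i + 1 < length p \<longrightarrow> (p ! i, p ! (i + 1)) \<in> E"
  then show "set (zip p (tl p)) \<subseteq> E" by (auto simp: set_zip nth_tl)
next
  assume H: "set (zip p (tl p)) \<subseteq> E"
  show "\<forall>i. i + 1 < length p \<longrightarrow> (p ! i, p ! (i + 1)) \<in> E"
  proof (intro allI impI)
    fix i assume i: "i + 1 < length p"
    have "(p ! i, tl p ! i) \<in> set (zip p (tl p))" using i by (auto simp: set_zip)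
    then show "(p ! i, p ! (i + 1)) \<in> E" using H i by (simp add: nth_tl subset_iff)
  qed
qed

lemma zip_app: "A \<noteq> [] \<Longrightarrow> B \<noteq> [] \<Longrightarrow>
  set (zip (A@B) (tl (A@B))) = set (zip A (tl A)) \<union> {(last A, hd B)} \<union> set (zip B (tl B))"
proof (induction A)
  case Nil then show ?case by simp
next
  case (Cons a A) then show ?case by (cases A; cases B) auto
qed

lemma is_path_app: "A \<noteq> [] \<Longrightarrow> B \<noteq> [] \<Longrightarrow> is_path V E (A@B) x y \<longleftrightarrow>
   (is_path V E A x (last A) \<and> is_path V E B (hd B) y \<and> (last A, hd B) \<in> E)"
  unfolding is_path_def edges_iff using zip_app[of A B] by auto

lemma path_len_app: "A \<noteq> [] \<Longrightarrow> B \<noteq> [] \<Longrightarrow> path_len (A@B) = path_len A + 1 + path_len B"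
  unfolding path_len_def by (cases A; cases B) auto

lemma decomp: "(u,v) \<in> set (zip p (tl p)) \<Longrightarrow> \<exists>xs ys. p = xs @ u # v # ys"
proof (induction p)
  case Nil then show ?case by simp
next
  case (Cons a p)
  show ?case
  proof (cases p)
    case Nil then show ?thesis using Cons by simp
  next
    case (Cons b p')
    have "zip (a#p) (tl (a#p)) = (a,b) # zip p (tl p)" using Cons by simp
    then have "(u,v) = (a,b) \<or> (u,v) \<in> set (zip p (tl p))" using Cons.prems by auto
    then show ?thesis
    proof
      assume "(u,v) = (a,b)" then show ?thesis using Cons by auto
    next
      assume "(u,v) \<in> set (zip p (tl p))"
      then obtain xs ys where "p = xs @ u # v # ys" using Cons.IH by blast
      then have "a # p = (a#xs) @ u # v # ys" by simp
      then show ?thesis by blast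
    qed
  qed
qed

lemma short_set: "p \<noteq> [] \<Longrightarrow> path_len p \<le> 1 \<Longrightarrow> set p \<subseteq> {hd p, last p}"
  unfolding path_len_def
  by (cases p; cases "tl p") auto

lemma fwd_in: "s \<in> EV_fwd V E s t l u" "u \<in> EV_fwd V E s t l u"
  unfolding EV_fwd_def fwd_paths_def is_path_def by auto

lemma bwd_in: "v \<in> EV_bwd V E s t l v" "t \<in> EV_bwd V E s t l v"
  unfolding EV_bwd_def bwd_paths_def is_path_def by auto

theorem theorem4p8:
  fixes V :: "'a set" and E :: "('a \<times> 'a) set" and s t :: 'a and k :: nat
  assumes "finite V" and "E \<subseteq> V \<times> V"
    and "s \<in> V" and "t \<in> V" and "s \<noteq> t"
    and "1 \<le> k" and "k \<le> 4"
  shows "spg_upper_edges V E s t k = spg_edges V E s t k"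
proof (rule equalityI)
  show "spg_upper_edges V E s t k \<subseteq> spg_edges V E s t k"
  proof
    fix e assume "e \<in> spg_upper_edges V E s t k"
    then obtain u v kf kb where e: "e = (u,v)" and uv: "(u,v) \<in> E"
      and F: "fwd_paths V E s t kf u \<noteq> {}" and B: "bwd_paths V E s t kb v \<noteq> {}"
      and kk: "kf + 1 + kb \<le> k" and D: "EV_fwd V E s t kf u \<inter> EV_bwd V E s t kb v = {}"
      unfolding spg_upper_edges_def by blast
    obtain P0 where P0: "P0 \<in> fwd_paths V E s t kf u" using F by blast
    obtain Q0 where Q0: "Q0 \<in> bwd_paths V E s t kb v" using B by blast
    have "\<exists>P Q. P \<in> fwd_paths V E s t kf u \<and> Q \<in> bwd_paths V E s t kb v \<and> set P \<inter> set Q = {}"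
    proof (cases "kf \<le> 1")
      case True
      have "set P0 \<subseteq> {s,u}" using short_set[of P0] P0 True
        unfolding fwd_paths_def is_path_def by auto
      have "u \<notin> EV_bwd V E s t kb v" using D fwd_in(2)[where u=u and V=V and E=E and s=s and t=t and l=kf] by blast
      then obtain Q where Q: "Q \<in> bwd_paths V E s t kb v" "u \<notin> set Q"
        unfolding EV_bwd_def by blast
      have "s \<notin> set Q" using Q unfolding bwd_paths_def by auto
      then show ?thesis using P0 Q \<open>set P0 \<subseteq> {s,u}\<close> by blast
    next
      case False
      then have "kb \<le> 1" using kk assms(7) by linarith
      have "set Q0 \<subseteq> {v,t}" using short_set[of Q0] Q0 \<open>kb \<le> 1\<close>
        unfolding bwd_paths_def is_path_def by auto
      have "v \<notin> EV_fwd V E s t kf u" using D bwd_in(1)[where v=v and V=V and E=E and s=s and t=t and l=kb] by blast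
      then obtain P where P: "P \<in> fwd_paths V E s t kf u" "v \<notin> set P"
        unfolding EV_fwd_def by blast
      have "t \<notin> set P" using P unfolding fwd_paths_def by auto
      then show ?thesis using Q0 P \<open>set Q0 \<subseteq> {v,t}\<close> by blast
    qed
    then obtain P Q where P: "P \<in> fwd_paths V E s t kf u" and Q: "Q \<in> bwd_paths V E s t kb v"
      and PQ: "set P \<inter> set Q = {}" by blast
    have ne: "P \<noteq> []" "Q \<noteq> []" using P Q unfolding fwd_paths_def bwd_paths_def is_path_def by auto
    have "is_path V E (P@Q) s t" using P Q uv ne is_path_app[of P Q V E s t]
      unfolding fwd_paths_def bwd_paths_def is_path_def by auto
    moreover have "distinct (P@Q)" using P Q PQ unfolding fwd_paths_def bwd_paths_def by auto
    moreover have "path_len (P@Q) \<le> k" using P Q ne path_len_app[of P Q] kk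
      unfolding fwd_paths_def bwd_paths_def by auto
    moreover have "(u,v) \<in> path_edges (P@Q)" using P Q ne zip_app[of P Q]
      unfolding path_edges_def fwd_paths_def bwd_paths_def is_path_def by auto
    ultimately show "e \<in> spg_edges V E s t k" unfolding spg_edges_def e by blast
  qed
next
  show "spg_edges V E s t k \<subseteq> spg_upper_edges V E s t k"
  proof
    fix e assume "e \<in> spg_edges V E s t k"
    then obtain p where ep: "e \<in> path_edges p" and pp: "is_path V E p s t" and dp: "distinct p"
      and lp: "path_len p \<le> k" unfolding spg_edges_def by blast
    obtain u v where e: "e = (u,v)" by (cases e)
    obtain xs ys where p: "p = xs @ u # v # ys" 
    proof -
      have "(u,v) \<in> set (zip p (tl p))" using ep e unfolding path_edges_def by simp
      from decomp[OF this] show ?thesis using that by blast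
    qed
    define P where "P = xs @ [u]"
    define Q where "Q = v # ys"
    have pPQ: "p = P @ Q" unfolding P_def Q_def p by simp
    have ne: "P \<noteq> []" "Q \<noteq> []" unfolding P_def Q_def by auto
    have ip: "is_path V E P s u" "is_path V E Q v t" "(u,v) \<in> E"
      using pp is_path_app[of P Q V E s t] ne unfolding pPQ by (auto simp: P_def Q_def)
    have dPQ: "distinct P" "distinct Q" "set P \<inter> set Q = {}" using dp unfolding pPQ by auto
    have "t \<in> set Q" using ip(2) unfolding is_path_def by auto
    then have tP: "t \<notin> set P" using dPQ by blast
    have "s \<in> set P" using ip(1) unfolding is_path_def by auto
    then have sQ: "s \<notin> set Q" using dPQ by blast
    have Pf: "P \<in> fwd_paths V E s t (path_len P) u" using ip dPQ tP unfolding fwd_paths_def by auto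
    have Qb: "Q \<in> bwd_paths V E s t (path_len Q) v" using ip dPQ sQ unfolding bwd_paths_def by auto
    have "EV_fwd V E s t (path_len P) u \<subseteq> set P" using Pf unfolding EV_fwd_def by blast
    moreover have "EV_bwd V E s t (path_len Q) v \<subseteq> set Q" using Qb unfolding EV_bwd_def by blast
    ultimately have "EV_fwd V E s t (path_len P) u \<inter> EV_bwd V E s t (path_len Q) v = {}"
      using dPQ by blast
    moreover have "path_len P + 1 + path_len Q \<le> k" using lp path_len_app[OF ne] pPQ by simp
    ultimately show "e \<in> spg_upper_edges V E s t k" unfolding spg_upper_edges_def e
      using ip(3) Pf Qb by blast
  qed
qed

end
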